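(* Let $\hat v\in\{0,1\}^{\mathcal T}$ be the indicator vector of a proper triple set, and let $(\lambda,\mu)$ be an optimal solution of the linear program $\mathrm{D}(\hat v)$ such that $\lambda_{t,1}=\lambda_{t,2}=\lambda_{t,3}=0$ for every $t$ with $\hat v_t=0$. Then $\lambda_{t,3}\le\eta$ for all $t\in\mathcal T$ and $\mu_J\le\eta$ for all $J\in\mathcal N$, where $\eta=-\sum_{i=1}^m\min(0,\alpha_i)$.
   Context: A multilinear program has data $n,m$, coefficients $\alpha_i\in\mathbb{R}$ and nonempty index sets $J_i\subseteq[n]$. Let $\mathcal N=\bigcup_i\{J:\emptyset\ne J\subseteq J_i\}$ and $\beta_J=\sum_{i:J_i=J}\alpha_i$. A triple is $t=(J,J',J'')$ with $J''\in\mathcal N$, $|J''|\ge2$, $J,J'$ nonempty, disjoint, $J\cup J'=J''$, listed with $J,J'$ in lexicographic order; $\mathsf{tail1}(t)=J$, $\mathsf{tail2}(t)=J'$, $\mathsf{head}(t)=J''$; $\mathcal T$ is the set of all triples. A proper triple set is a set $T\subseteq\mathcal T$ containing a subset $T'$ such that (1) every $J_i$ with $|J_i|>1$ is the head of some triple in $T'$, and (2) whenever a set $J$ with $|J|>1$ is the first or second element of a triple in $T'$, $J$ is the head of a different triple in $T'$; its indicator vector has $\hat v_t=1$ iff $t\in T$. $\mathrm{D}(\hat v)$: maximize $-\sum_{t\in\mathcal T}[(1-\hat v_t)(\lambda_{t,1}+\lambda_{t,2})+(2-\hat v_t)\lambda_{t,3}]-\sum_{J\in\mathcal N}\mu_J$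 over $\lambda\ge0,\mu\ge0$ subject to, for every $J\in\mathcal N$, $\beta_J+\sum_{t:\mathsf{tail1}(t)=J}(-\lambda_{t,1}+\lambda_{t,3})+\sum_{t:\mathsf{tail2}(t)=J}(-\lambda_{t,2}+\lambda_{t,3})+\sum_{t:\mathsf{head}(t)=J}(\lambda_{t,1}+\lambda_{t,2}-\lambda_{t,3})+\mu_J\ge0$. *)

theory Defs
  imports Complex_Main
begin

text \<open>Data of a multilinear program: indices i range over {1..m}, variables over [n] = {1..n};
  coefficients alpha i and index sets Js i.\<close>

type_synonym triple = "nat set \<times> nat set \<times> nat set"

definition tail1 :: "triple \<Rightarrow> nat set" where "tail1 t = fst t"
definition tail2 :: "triple \<Rightarrow> nat set" where "tail2 t = fst (snd t)"
definition head  :: "triple \<Rightarrow> nat set" where "head t = snd (snd t)"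

definition NN :: "nat \<Rightarrow> (nat \<Rightarrow> nat set) \<Rightarrow> nat set set" where
  "NN m Js = (\<Union>i\<in>{1..m}. {J. J \<noteq> {} \<and> J \<subseteq> Js i})"

definition beta :: "nat \<Rightarrow> (nat \<Rightarrow> real) \<Rightarrow> (nat \<Rightarrow> nat set) \<Rightarrow> nat set \<Rightarrow> real" where
  "beta m alpha Js J = (\<Sum>i\<in>{i\<in>{1..m}. Js i = J}. alpha i)"

definition set_lex_less :: "nat set \<Rightarrow> nat set \<Rightarrow> bool" where
  "set_lex_less A B \<longleftrightarrow> (sorted_list_of_set A, sorted_list_of_set B) \<in> lexord {(a, b). a < b}"

definition TT :: "nat \<Rightarrow> (nat \<Rightarrow> nat set) \<Rightarrow> triple set" where
  "TT m Js = {(J, J', J''). J'' \<in> NN m Js \<and> card J'' \<ge> 2 \<and> J \<noteq> {} \<and> J' \<noteq> {}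
      \<and> J \<inter> J' = {} \<and> J \<union> J' = J'' \<and> set_lex_less J J'}"

definition proper_triple_set :: "nat \<Rightarrow> (nat \<Rightarrow> nat set) \<Rightarrow> triple set \<Rightarrow> bool" where
  "proper_triple_set m Js T \<longleftrightarrow> T \<subseteq> TT m Js \<and>
     (\<exists>T' \<subseteq> T.
        (\<forall>i\<in>{1..m}. card (Js i) > 1 \<longrightarrow> (\<exists>t\<in>T'. head t = Js i)) \<and>
        (\<forall>t\<in>T'. \<forall>J\<in>{tail1 t, tail2 t}. card J > 1 \<longrightarrow> (\<exists>t'\<in>T'. t' \<noteq> t \<and> head t' = J)))"

definition D_feasible :: "nat \<Rightarrow> (nat \<Rightarrow> real) \<Rightarrow> (nat \<Rightarrow> nat set)
    \<Rightarrow> (triple \<Rightarrow> nat \<Rightarrow> real) \<Rightarrow> (nat set \<Rightarrow> real) \<Rightarrow> bool" where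
  "D_feasible m alpha Js lam mu \<longleftrightarrow>
     (\<forall>t\<in>TT m Js. \<forall>k\<in>{1,2,3}. lam t k \<ge> 0) \<and> (\<forall>J\<in>NN m Js. mu J \<ge> 0) \<and>
     (\<forall>J\<in>NN m Js.
        beta m alpha Js J
        + (\<Sum>t\<in>{t\<in>TT m Js. tail1 t = J}. - lam t 1 + lam t 3)
        + (\<Sum>t\<in>{t\<in>TT m Js. tail2 t = J}. - lam t 2 + lam t 3)
        + (\<Sum>t\<in>{t\<in>TT m Js. head t = J}. lam t 1 + lam t 2 - lam t 3)
        + mu J \<ge> 0)"

definition D_obj :: "nat \<Rightarrow> (nat \<Rightarrow> nat set) \<Rightarrow> (triple \<Rightarrow> real)
    \<Rightarrow> (triple \<Rightarrow> nat \<Rightarrow> real) \<Rightarrow> (nat set \<Rightarrow> real) \<Rightarrow> real" where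
  "D_obj m Js vhat lam mu =
     - (\<Sum>t\<in>TT m Js. (1 - vhat t) * (lam t 1 + lam t 2) + (2 - vhat t) * lam t 3)
     - (\<Sum>J\<in>NN m Js. mu J)"

definition D_optimal :: "nat \<Rightarrow> (nat \<Rightarrow> real) \<Rightarrow> (nat \<Rightarrow> nat set) \<Rightarrow> (triple \<Rightarrow> real)
    \<Rightarrow> (triple \<Rightarrow> nat \<Rightarrow> real) \<Rightarrow> (nat set \<Rightarrow> real) \<Rightarrow> bool" where
  "D_optimal m alpha Js vhat lam mu \<longleftrightarrow>
     D_feasible m alpha Js lam mu \<and>
     (\<forall>lam' mu'. D_feasible m alpha Js lam' mu' \<longrightarrow>
        D_obj m Js vhat lam' mu' \<le> D_obj m Js vhat lam mu)"

end

theory Submission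
  imports Defs
begin

lemma NN_sub: assumes Js: "\<forall>i\<in>{1..m}. Js i \<noteq> {} \<and> Js i \<subseteq> {1..n}"
  shows "NN m Js \<subseteq> Pow {1..n}"
  using Js unfolding NN_def by auto

lemma NN_fin: assumes Js: "\<forall>i\<in>{1..m}. Js i \<noteq> {} \<and> Js i \<subseteq> {1..n}"
  shows "finite (NN m Js)"
  using NN_sub[OF Js] by (meson finite_Pow_iff finite_atLeastAtMost finite_subset)

lemma TT_fin: assumes Js: "\<forall>i\<in>{1..m}. Js i \<noteq> {} \<and> Js i \<subseteq> {1..n}"
  shows "finite (TT m Js)"
proof -
  have "TT m Js \<subseteq> Pow {1..n} \<times> Pow {1..n} \<times> NN m Js"
    using NN_sub[OF Js] unfolding TT_def by auto
  moreover have "finite (Pow {1..n} \<times> Pow {1..n} \<times> NN m Js)"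
    using NN_fin[OF Js] by simp
  ultimately show ?thesis by (rule finite_subset)
qed

theorem lemma4:
  fixes n m :: nat and alpha :: "nat \<Rightarrow> real" and Js :: "nat \<Rightarrow> nat set"
    and T :: "triple set" and vhat :: "triple \<Rightarrow> real"
    and lam :: "triple \<Rightarrow> nat \<Rightarrow> real" and mu :: "nat set \<Rightarrow> real"
  assumes Js: "\<forall>i\<in>{1..m}. Js i \<noteq> {} \<and> Js i \<subseteq> {1..n}"
    and proper: "proper_triple_set m Js T"
    and vhat: "\<forall>t\<in>TT m Js. vhat t = (if t \<in> T then 1 else 0)"
    and opt: "D_optimal m alpha Js vhat lam mu"
    and zero: "\<forall>t\<in>TT m Js. vhat t = 0 \<longrightarrow> lam t 1 = 0 \<and> lam t 2 = 0 \<and> lam t 3 = 0"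
  shows "(\<forall>t\<in>TT m Js. lam t 3 \<le> - (\<Sum>i=1..m. min 0 (alpha i)))
       \<and> (\<forall>J\<in>NN m Js. mu J \<le> - (\<Sum>i=1..m. min 0 (alpha i)))"
proof -
  define eta where "eta = - (\<Sum>i=1..m. min 0 (alpha i))"
  define mu0 where "mu0 J = max 0 (- beta m alpha Js J)" for J
  define lam0 :: "triple \<Rightarrow> nat \<Rightarrow> real" where "lam0 t k = 0" for t k
  have finN: "finite (NN m Js)" using NN_fin[OF Js] .
  have finT: "finite (TT m Js)" using TT_fin[OF Js] .
  have feas: "D_feasible m alpha Js lam mu" using opt unfolding D_optimal_def by auto
  have best: "D_obj m Js vhat lam0 mu0 \<le> D_obj m Js vhat lam mu" if "D_feasible m alpha Js lam0 mu0"
    using opt that unfolding D_optimal_def by auto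
  have f0: "D_feasible m alpha Js lam0 mu0"
    unfolding D_feasible_def lam0_def mu0_def by auto
  have img: "Js ` {1..m} \<subseteq> NN m Js" using Js unfolding NN_def by auto
  have "(\<Sum>J\<in>NN m Js. mu0 J) \<le> (\<Sum>J\<in>NN m Js. \<Sum>i\<in>{i\<in>{1..m}. Js i = J}. - min 0 (alpha i))"
  proof (rule sum_mono)
    fix J assume "J \<in> NN m Js"
    have "- beta m alpha Js J \<le> (\<Sum>i\<in>{i\<in>{1..m}. Js i = J}. - min 0 (alpha i))"
      unfolding beta_def sum_negf[symmetric] by (rule sum_mono) auto
    moreover have "0 \<le> (\<Sum>i\<in>{i\<in>{1..m}. Js i = J}. - min 0 (alpha i))"
      by (rule sum_nonneg) auto
    ultimately show "mu0 J \<le> (\<Sum>i\<in>{i\<in>{1..m}. Js i = J}. - min 0 (alpha i))"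
      unfolding mu0_def by simp
  qed
  also have "\<dots> = (\<Sum>i\<in>{1..m}. - min 0 (alpha i))"
    by (rule sum.group[OF _ finN img]) simp
  also have "\<dots> = eta" unfolding eta_def by (simp add: sum_negf)
  finally have s0: "(\<Sum>J\<in>NN m Js. mu0 J) \<le> eta" .
  have "D_obj m Js vhat lam0 mu0 = - (\<Sum>J\<in>NN m Js. mu0 J)"
    unfolding D_obj_def lam0_def by simp
  with best[OF f0] s0 have ob: "- eta \<le> D_obj m Js vhat lam mu" by linarith
  define f where "f t = (1 - vhat t) * (lam t 1 + lam t 2) + (2 - vhat t) * lam t 3" for t
  have l3: "0 \<le> lam t 3" if "t \<in> TT m Js" for t using feas that unfolding D_feasible_def by auto
  have mun: "0 \<le> mu J" if "J \<in> NN m Js" for J using feas that unfolding D_feasible_def by auto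
  have fge: "lam t 3 \<le> f t" if "t \<in> TT m Js" for t
  proof (cases "t \<in> T")
    case True then show ?thesis using vhat that unfolding f_def by auto
  next
    case False then show ?thesis using vhat zero that unfolding f_def by auto
  qed
  have fnn: "0 \<le> f t" if "t \<in> TT m Js" for t using fge[OF that] l3[OF that] by linarith
  have sf: "0 \<le> sum f (TT m Js)" using fnn by (simp add: sum_nonneg)
  have sm: "0 \<le> sum mu (NN m Js)" using mun by (simp add: sum_nonneg)
  have tot: "sum f (TT m Js) + sum mu (NN m Js) \<le> eta"
    using ob unfolding D_obj_def f_def by simp
  show ?thesis unfolding eta_def[symmetric]
  proof (intro conjI ballI)
    fix t assume t: "t \<in> TT m Js"
    have "f t \<le> sum f (TT m Js)" by (rule member_le_sum[OF t]) (use fnn finT in auto)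
    then show "lam t 3 \<le> eta" using fge[OF t] tot sm by linarith
  next
    fix J assume J: "J \<in> NN m Js"
    have "mu J \<le> sum mu (NN m Js)" by (rule member_le_sum[OF J]) (use mun finN in auto)
    then show "mu J \<le> eta" using tot sf by linarith
  qed
qed

end
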